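(* Let $(E,P,\vartheta)$ be a complete bipolar metric space and let $F\colon E\cup P\to E\cup P$ with $F(E)\subseteq E$, $F(P)\subseteq P$ be a polynomial contraction, i.e. there exist $\pi\in(0,1)$, an integer $\sigma\geq1$ and functions $q_\upsilon\colon E\times P\to[0,\infty)$, $\upsilon=0,\dots,\sigma$, such that $$\sum_{\upsilon=0}^{\sigma} q_\upsilon(Fe,Ff)\,\vartheta^\upsilon(Fe,Ff)\leq \pi\sum_{\upsilon=0}^{\sigma} q_\upsilon(e,f)\,\vartheta^\upsilon(e,f)\quad\text{for all } e\in E,\ f\in P.$$ Assume (i) $F$ is Picard-continuous, and (ii) there exist $\varrho\in\{1,\dots,\sigma\}$ and $Q_\varrho>0$ with $q_\varrho(e,f)\geq Q_\varrho$ for all $e\in E$, $f\in P$. Then $F$ has a unique fixed point.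
   Context: A bipolar metric space is a triple $(E,P,\vartheta)$ where $E,P$ are nonempty sets and $\vartheta\colon E\times P\to[0,\infty)$ satisfies: (1) for $e\in E$, $f\in P$, $\vartheta(e,f)=0$ iff $e=f$; (2) $\vartheta(e,f)=\vartheta(f,e)$ whenever $e,f\in E\cap P$; (3) $\vartheta(e,f)\leq\vartheta(e,z)+\vartheta(r,z)+\vartheta(r,f)$ for all $e,r\in E$, $z,f\in P$. A sequence $(x_n)$ in $E$ converges to $y\in P$ if $\vartheta(x_n,y)\to0$; a sequence $(y_n)$ in $P$ converges to $x\in E$ if $\vartheta(x,y_n)\to0$. A bisequence $(x_n,y_n)$ with $x_n\in E$, $y_n\in P$ is Cauchy if for every $\varepsilon>0$ there is $N$ with $\vartheta(x_n,y_m)<\varepsilon$ for all $n,m\geq N$; the space is complete if every Cauchy bisequence is convergent. $F$ is Picard-continuous if for all $g\in E$, $h\in P$: $\lim_{n\to\infty}\vartheta(F^n g,h)=0$ implies $\lim_{n\to\infty}\vartheta(F(F^ng),Fh)=0$, where $F^0g=g$, $F^{n+1}g=F(F^ng)$. $\vartheta^\upsilon$ denotes the $\upsilon$-th power of $\vartheta$, with $\vartheta^0\equiv1$. A fixed point of $F$ is a point $g$ with $Fg=g$. *)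

theory Defs
  imports "HOL-Analysis.Analysis"
begin

definition bipolar_metric_space :: "'a set \<Rightarrow> 'a set \<Rightarrow> ('a \<Rightarrow> 'a \<Rightarrow> real) \<Rightarrow> bool" where
  "bipolar_metric_space E P d \<longleftrightarrow>
     E \<noteq> {} \<and> P \<noteq> {} \<and>
     (\<forall>e\<in>E. \<forall>f\<in>P. d e f \<ge> 0) \<and>
     (\<forall>e\<in>E. \<forall>f\<in>P. d e f = 0 \<longleftrightarrow> e = f) \<and>
     (\<forall>e\<in>E \<inter> P. \<forall>f\<in>E \<inter> P. d e f = d f e) \<and>
     (\<forall>e\<in>E. \<forall>r\<in>E. \<forall>z\<in>P. \<forall>f\<in>P. d e f \<le> d e z + d r z + d r f)"

definition bp_conv_left :: "('a \<Rightarrow> 'a \<Rightarrow> real) \<Rightarrow> (nat \<Rightarrow> 'a) \<Rightarrow> 'a \<Rightarrow> bool" where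
  "bp_conv_left d x y \<longleftrightarrow> (\<lambda>n. d (x n) y) \<longlonglongrightarrow> 0"

definition bp_conv_right :: "('a \<Rightarrow> 'a \<Rightarrow> real) \<Rightarrow> (nat \<Rightarrow> 'a) \<Rightarrow> 'a \<Rightarrow> bool" where
  "bp_conv_right d y x \<longleftrightarrow> (\<lambda>n. d x (y n)) \<longlonglongrightarrow> 0"

definition bp_cauchy :: "('a \<Rightarrow> 'a \<Rightarrow> real) \<Rightarrow> (nat \<Rightarrow> 'a) \<Rightarrow> (nat \<Rightarrow> 'a) \<Rightarrow> bool" where
  "bp_cauchy d x y \<longleftrightarrow> (\<forall>\<epsilon>>0. \<exists>N. \<forall>n\<ge>N. \<forall>m\<ge>N. d (x n) (y m) < \<epsilon>)"

definition bp_convergent_biseq :: "'a set \<Rightarrow> 'a set \<Rightarrow> ('a \<Rightarrow> 'a \<Rightarrow> real) \<Rightarrow> (nat \<Rightarrow> 'a) \<Rightarrow> (nat \<Rightarrow> 'a) \<Rightarrow> bool" where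
  "bp_convergent_biseq E P d x y \<longleftrightarrow>
     (\<exists>v\<in>P. bp_conv_left d x v) \<and> (\<exists>u\<in>E. bp_conv_right d y u)"

definition bp_complete :: "'a set \<Rightarrow> 'a set \<Rightarrow> ('a \<Rightarrow> 'a \<Rightarrow> real) \<Rightarrow> bool" where
  "bp_complete E P d \<longleftrightarrow>
     (\<forall>x y. (\<forall>n. x n \<in> E) \<longrightarrow> (\<forall>n. y n \<in> P) \<longrightarrow> bp_cauchy d x y \<longrightarrow> bp_convergent_biseq E P d x y)"

definition picard_continuous :: "'a set \<Rightarrow> 'a set \<Rightarrow> ('a \<Rightarrow> 'a \<Rightarrow> real) \<Rightarrow> ('a \<Rightarrow> 'a) \<Rightarrow> bool" where
  "picard_continuous E P d F \<longleftrightarrow>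
     (\<forall>g\<in>E. \<forall>h\<in>P. (\<lambda>n. d ((F ^^ n) g) h) \<longlonglongrightarrow> 0 \<longrightarrow>
        (\<lambda>n. d (F ((F ^^ n) g)) (F h)) \<longlonglongrightarrow> 0)"

end

theory Submission
  imports Defs
begin

theorem theorem3p11:
  fixes E P :: "'a set" and d :: "'a \<Rightarrow> 'a \<Rightarrow> real" and F :: "'a \<Rightarrow> 'a"
    and \<pi> :: real and \<sigma> :: nat and q :: "nat \<Rightarrow> 'a \<Rightarrow> 'a \<Rightarrow> real"
    and \<rho> :: nat and Q :: real
  assumes bms: "bipolar_metric_space E P d"
    and compl: "bp_complete E P d"
    and FE: "F ` E \<subseteq> E" and FP: "F ` P \<subseteq> P"
    and pi: "0 < \<pi>" "\<pi> < 1"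
    and sigma: "\<sigma> \<ge> 1"
    and q_nonneg: "\<And>v e f. v \<le> \<sigma> \<Longrightarrow> e \<in> E \<Longrightarrow> f \<in> P \<Longrightarrow> q v e f \<ge> 0"
    and contr: "\<And>e f. e \<in> E \<Longrightarrow> f \<in> P \<Longrightarrow>
        (\<Sum>v=0..\<sigma>. q v (F e) (F f) * d (F e) (F f) ^ v) \<le> \<pi> * (\<Sum>v=0..\<sigma>. q v e f * d e f ^ v)"
    and picard: "picard_continuous E P d F"
    and rho: "1 \<le> \<rho>" "\<rho> \<le> \<sigma>" and Qpos: "Q > 0"
    and qrho: "\<And>e f. e \<in> E \<Longrightarrow> f \<in> P \<Longrightarrow> q \<rho> e f \<ge> Q"
  shows "\<exists>!g. g \<in> E \<union> P \<and> F g = g"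
proof -
  define S where "S e f = (\<Sum>v=0..\<sigma>. q v e f * d e f ^ v)" for e f
  have dnn: "\<And>e f. e \<in> E \<Longrightarrow> f \<in> P \<Longrightarrow> d e f \<ge> 0"
    using bms unfolding bipolar_metric_space_def by auto
  have d0: "\<And>e f. e \<in> E \<Longrightarrow> f \<in> P \<Longrightarrow> d e f = 0 \<longleftrightarrow> e = f"
    using bms unfolding bipolar_metric_space_def by auto
  have tri: "\<And>e r z f. e \<in> E \<Longrightarrow> r \<in> E \<Longrightarrow> z \<in> P \<Longrightarrow> f \<in> P \<Longrightarrow>
      d e f \<le> d e z + d r z + d r f"
    using bms unfolding bipolar_metric_space_def by auto
  have rpos: "0 < \<rho>" using rho by simp
  have FnE: "\<And>n e. e \<in> E \<Longrightarrow> (F ^^ n) e \<in> E"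
  proof -
    fix n e assume "e \<in> E" then show "(F ^^ n) e \<in> E"
      by (induction n) (use FE in auto)
  qed
  have FnP: "\<And>n e. e \<in> P \<Longrightarrow> (F ^^ n) e \<in> P"
  proof -
    fix n e assume "e \<in> P" then show "(F ^^ n) e \<in> P"
      by (induction n) (use FP in auto)
  qed
  have S_nn: "\<And>e f. e \<in> E \<Longrightarrow> f \<in> P \<Longrightarrow> S e f \<ge> 0"
    unfolding S_def by (intro sum_nonneg mult_nonneg_nonneg) (auto intro: q_nonneg dnn zero_le_power)
  have S_ge: "Q * d e f ^ \<rho> \<le> S e f" if "e \<in> E" "f \<in> P" for e f
  proof -
    have "Q * d e f ^ \<rho> \<le> q \<rho> e f * d e f ^ \<rho>"
      by (intro mult_right_mono qrho that zero_le_power dnn)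
    also have "\<dots> \<le> S e f" unfolding S_def
      by (rule member_le_sum[where f="\<lambda>v. q v e f * d e f ^ v"])
         (use rho that in \<open>auto intro!: mult_nonneg_nonneg q_nonneg dnn zero_le_power\<close>)
    finally show ?thesis .
  qed
  have S_iter: "S ((F ^^ k) e) ((F ^^ k) f) \<le> \<pi> ^ k * S e f" if "e \<in> E" "f \<in> P" for k e f
  proof (induction k)
    case 0 then show ?case by simp
  next
    case (Suc k)
    have "S ((F ^^ Suc k) e) ((F ^^ Suc k) f) \<le> \<pi> * S ((F ^^ k) e) ((F ^^ k) f)"
      unfolding S_def using contr FnE FnP that by simp
    also have "\<dots> \<le> \<pi> * (\<pi> ^ k * S e f)" using Suc pi by simp
    finally show ?case by simp
  qed
  define lam where "lam = root \<rho> \<pi>"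
  have lam: "0 < lam" "lam < 1" unfolding lam_def using pi rpos by (auto intro: real_root_gt_zero)
  have dbound: "d ((F ^^ k) e) ((F ^^ k) f) \<le> root \<rho> (S e f / Q) * lam ^ k"
    if "e \<in> E" "f \<in> P" for k e f
  proof -
    let ?d = "d ((F ^^ k) e) ((F ^^ k) f)"
    have dn: "?d \<ge> 0" using dnn FnE FnP that by blast
    have "Q * ?d ^ \<rho> \<le> \<pi> ^ k * S e f"
      using S_ge[OF FnE[OF that(1)] FnP[OF that(2)], of k k] S_iter[OF that, of k] by linarith
    then have "?d ^ \<rho> \<le> \<pi> ^ k * (S e f / Q)" using Qpos by (simp add: field_simps)
    then have "root \<rho> (?d ^ \<rho>) \<le> root \<rho> (\<pi> ^ k * (S e f / Q))"
      by (rule real_root_le_mono[OF rpos])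
    moreover have "root \<rho> (?d ^ \<rho>) = ?d" using dn rpos by (simp add: real_root_power_cancel)
    moreover have "root \<rho> (\<pi> ^ k * (S e f / Q)) = lam ^ k * root \<rho> (S e f / Q)"
      unfolding lam_def using rpos by (simp only: real_root_mult real_root_power)
    ultimately show ?thesis by (simp add: mult.commute)
  qed
  obtain g0 where g0: "g0 \<in> E" using bms unfolding bipolar_metric_space_def by auto
  obtain h0 where h0: "h0 \<in> P" using bms unfolding bipolar_metric_space_def by auto
  define x where "x n = (F ^^ n) g0" for n
  define y where "y n = (F ^^ n) h0" for n
  have xE: "x n \<in> E" for n unfolding x_def using FnE g0 by blast
  have yP: "y n \<in> P" for n unfolding y_def using FnP h0 by blast
  define C where "C = max (root \<rho> (S g0 h0 / Q)) (max (root \<rho> (S (F g0) h0 / Q)) (root \<rho> (S g0 (F h0) / Q)))"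
  have a: "d (x k) (y k) \<le> C * lam ^ k" for k
  proof -
    have "d (x k) (y k) \<le> root \<rho> (S g0 h0 / Q) * lam ^ k" unfolding x_def y_def by (rule dbound[OF g0 h0])
    also have "\<dots> \<le> C * lam ^ k" unfolding C_def using lam by (intro mult_right_mono) auto
    finally show ?thesis .
  qed
  have b: "d (x (Suc k)) (y k) \<le> C * lam ^ k" for k
  proof -
    have "d (x (Suc k)) (y k) = d ((F ^^ k) (F g0)) ((F ^^ k) h0)"
      unfolding x_def y_def by (simp add: funpow_Suc_right del: funpow.simps)
    also have "\<dots> \<le> root \<rho> (S (F g0) h0 / Q) * lam ^ k" by (rule dbound) (use g0 h0 FE in auto)
    also have "\<dots> \<le> C * lam ^ k" unfolding C_def using lam by (intro mult_right_mono) auto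
    finally show ?thesis .
  qed
  have c: "d (x k) (y (Suc k)) \<le> C * lam ^ k" for k
  proof -
    have "d (x k) (y (Suc k)) = d ((F ^^ k) g0) ((F ^^ k) (F h0))"
      unfolding x_def y_def by (simp add: funpow_Suc_right del: funpow.simps)
    also have "\<dots> \<le> root \<rho> (S g0 (F h0) / Q) * lam ^ k" by (rule dbound) (use g0 h0 FP in auto)
    also have "\<dots> \<le> C * lam ^ k" unfolding C_def using lam by (intro mult_right_mono) auto
    finally show ?thesis .
  qed
  have C0: "C \<ge> 0" using a[of 0] dnn[OF xE yP, of 0 0] by simp
  have lamk: "lam ^ Suc k \<le> lam ^ k" for k using lam by (simp add: power_decreasing)
  have A: "d (x n) (y (n + j)) \<le> C * lam ^ n + 2 * C * (\<Sum>k<j. lam ^ (n + k))" for n j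
  proof (induction j)
    case 0 then show ?case using a[of n] by simp
  next
    case (Suc j)
    have "d (x n) (y (n + Suc j)) \<le> d (x n) (y (n + j)) + d (x (Suc (n + j))) (y (n + j)) + d (x (Suc (n + j))) (y (Suc (n+j)))"
      using tri xE yP by simp
    also have "\<dots> \<le> C * lam ^ n + 2 * C * (\<Sum>k<j. lam ^ (n + k)) + C * lam ^ (n + j) + C * lam ^ (n + j)"
      using Suc b[of "n+j"] a[of "Suc (n+j)"] lamk[of "n+j"] C0 mult_left_mono[OF lamk[of "n+j"] C0] by linarith
    finally show ?case by (simp add: algebra_simps)
  qed
  have B: "d (x (m + j)) (y m) \<le> C * lam ^ m + 2 * C * (\<Sum>k<j. lam ^ (m + k))" for m j
  proof (induction j)
    case 0 then show ?case using a[of m] by simp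
  next
    case (Suc j)
    have "d (x (m + Suc j)) (y m) \<le> d (x (Suc (m + j))) (y (Suc (m + j))) + d (x (m + j)) (y (Suc (m+j))) + d (x (m + j)) (y m)"
      using tri xE yP by simp
    also have "\<dots> \<le> C * lam ^ m + 2 * C * (\<Sum>k<j. lam ^ (m + k)) + C * lam ^ (m + j) + C * lam ^ (m + j)"
      using Suc c[of "m+j"] a[of "Suc (m+j)"] C0 mult_left_mono[OF lamk[of "m+j"] C0] by linarith
    finally show ?case by (simp add: algebra_simps)
  qed
  define D where "D = 3 * C / (1 - lam)"
  have geo: "C * lam ^ n + 2 * C * (\<Sum>k<j. lam ^ (n + k)) \<le> D * lam ^ n" for n j
  proof -
    have "(\<Sum>k<j. lam ^ (n + k)) = lam ^ n * (\<Sum>k<j. lam ^ k)"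
      by (simp add: power_add sum_distrib_left)
    also have "(\<Sum>k<j. lam ^ k) = (1 - lam ^ j) / (1 - lam)" using lam by (simp add: sum_gp_strict)
    also have "\<dots> \<le> 1 / (1 - lam)" using lam by (intro divide_right_mono) auto
    finally have s: "(\<Sum>k<j. lam ^ (n + k)) \<le> lam ^ n * (1 / (1 - lam))"
      using lam by (simp add: mult_left_mono)
    have o: "1 \<le> 1 / (1 - lam)" using lam by simp
    have ln: "lam ^ n \<ge> 0" using lam by simp
    have "C * lam ^ n \<le> C * lam ^ n * (1 / (1 - lam))"
      using mult_left_mono[OF o mult_nonneg_nonneg[OF C0 ln]] by simp
    moreover have "2 * C * (\<Sum>k<j. lam ^ (n + k)) \<le> 2 * C * (lam ^ n * (1 / (1 - lam)))"
      using s C0 by (intro mult_left_mono) auto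
    moreover have "D * lam ^ n = C * lam ^ n * (1 / (1 - lam)) + 2 * C * (lam ^ n * (1 / (1 - lam)))"
      unfolding D_def by (simp add: divide_inverse algebra_simps)
    ultimately show ?thesis by linarith
  qed
  have D0: "D \<ge> 0" unfolding D_def using C0 lam by simp
  have bnd: "d (x n) (y m) \<le> D * lam ^ min n m" for n m
  proof (cases "n \<le> m")
    case True
    then obtain j where "m = n + j" using le_Suc_ex by blast
    then show ?thesis using A[of n j] geo[of n j] True by simp
  next
    case False
    then obtain j where "n = m + j" using le_Suc_ex[of m n] by auto
    then show ?thesis using B[of m j] geo[of m j] False by simp
  qed
  have cauchy: "bp_cauchy d x y"
    unfolding bp_cauchy_def
  proof (intro allI impI)
    fix \<epsilon> :: real assume ep: "\<epsilon> > 0"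
    have "(\<lambda>n. D * lam ^ n) \<longlonglongrightarrow> 0"
      using lam by (intro tendsto_mult_right_zero LIMSEQ_power_zero) auto
    then obtain N where N: "\<And>n. n \<ge> N \<Longrightarrow> \<bar>D * lam ^ n\<bar> < \<epsilon>"
      using ep unfolding lim_sequentially dist_real_def by force
    show "\<exists>N. \<forall>n\<ge>N. \<forall>m\<ge>N. d (x n) (y m) < \<epsilon>"
    proof (intro exI allI impI)
      fix n m assume "n \<ge> N" "m \<ge> N"
      then have "min n m \<ge> N" by simp
      then have "\<bar>D * lam ^ min n m\<bar> < \<epsilon>" by (rule N)
      then show "d (x n) (y m) < \<epsilon>" using bnd[of n m] by linarith
    qed
  qed
  obtain v u where vP: "v \<in> P" and uE: "u \<in> E" and cv: "(\<lambda>n. d (x n) v) \<longlonglongrightarrow> 0"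
    and cu: "(\<lambda>n. d u (y n)) \<longlonglongrightarrow> 0"
    using compl cauchy xE yP unfolding bp_complete_def bp_convergent_biseq_def bp_conv_left_def bp_conv_right_def
    by blast
  have Cl: "(\<lambda>n. C * lam ^ n) \<longlonglongrightarrow> 0"
    using lam by (intro tendsto_mult_right_zero LIMSEQ_power_zero) auto
  have a0: "(\<lambda>n. d (x n) (y n)) \<longlonglongrightarrow> 0"
    by (rule real_tendsto_sandwich[OF _ _ tendsto_const Cl]) (use a dnn xE yP in auto)
  have b0: "(\<lambda>n. d (x (Suc n)) (y n)) \<longlonglongrightarrow> 0"
    by (rule real_tendsto_sandwich[OF _ _ tendsto_const Cl]) (use b dnn xE yP in auto)
  have "d u v \<le> 0"
  proof (rule LIMSEQ_le_const)
    show "(\<lambda>n. d u (y n) + d (x n) (y n) + d (x n) v) \<longlonglongrightarrow> 0"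
      using tendsto_add[OF tendsto_add[OF cu a0] cv] by simp
    show "\<exists>N. \<forall>n\<ge>N. d u v \<le> d u (y n) + d (x n) (y n) + d (x n) v"
      using tri uE xE yP vP by blast
  qed
  then have "u = v" using d0[OF uE vP] dnn[OF uE vP] by simp
  then have uP: "u \<in> P" using vP by simp
  have "(\<lambda>n. d (F ((F ^^ n) g0)) (F u)) \<longlonglongrightarrow> 0"
    using picard g0 uP cv \<open>u = v\<close> unfolding picard_continuous_def x_def by blast
  then have cF: "(\<lambda>n. d (x (Suc n)) (F u)) \<longlonglongrightarrow> 0" unfolding x_def by simp
  have FuP: "F u \<in> P" using FP uP by blast
  have "d u (F u) \<le> 0"
  proof (rule LIMSEQ_le_const)
    show "(\<lambda>n. d u (y n) + d (x (Suc n)) (y n) + d (x (Suc n)) (F u)) \<longlonglongrightarrow> 0"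
      using tendsto_add[OF tendsto_add[OF cu b0] cF] by simp
    show "\<exists>N. \<forall>n\<ge>N. d u (F u) \<le> d u (y n) + d (x (Suc n)) (y n) + d (x (Suc n)) (F u)"
      using tri uE xE yP FuP by blast
  qed
  then have Fufix: "F u = u" using d0[OF uE FuP] dnn[OF uE FuP] by simp
  have uniq: "e = f" if "e \<in> E" "f \<in> P" "F e = e" "F f = f" for e f
  proof -
    have "S e f \<le> \<pi> * S e f" using contr[OF that(1,2)] that(3,4) unfolding S_def by simp
    then have "S e f \<le> 0" using pi S_nn[OF that(1,2)] by (smt (verit) mult_le_cancel_right1)
    then have "Q * d e f ^ \<rho> \<le> 0" using S_ge[OF that(1,2)] by linarith
    then have "d e f ^ \<rho> \<le> 0" using Qpos by (simp add: mult_le_0_iff)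
    then have "d e f = 0" using dnn[OF that(1,2)] rpos
      by (metis le_less_trans less_eq_real_def not_less zero_less_power)
    then show ?thesis using d0 that by blast
  qed
  show ?thesis
  proof (rule ex1I[of _ u])
    show "u \<in> E \<union> P \<and> F u = u" using uE Fufix by simp
    fix g assume g: "g \<in> E \<union> P \<and> F g = g"
    then show "g = u" using uniq[of g u] uniq[of u g] uE uP Fufix by auto
  qed
qed

end
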